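(* Let $N\in\mathbb{N}$, $\gamma_1,\dots,\gamma_N\ge 0$, and let $\Phi_1,\dots,\Phi_N$ be independent random variables where $\Phi_i$ has the law of $Y_i\bmod 2\pi$ with $Y_i\sim\mathcal{N}(0,\gamma_i)$. For $\mathcal{S}\subseteq\{1,\dots,N\}$ let $\overline{G}(\mathcal{S}):=\sum_{i\in\mathcal{S}}\sum_{j\in\mathcal{S}}\cos(\Phi_i-\Phi_j)$. Then for any $\mathcal{S}\subseteq\mathcal{S}'\subseteq\{1,\dots,N\}$, $$\mathbb{E}\big[\overline{G}(\mathcal{S})\big]\le\mathbb{E}\big[\overline{G}(\mathcal{S}')\big].$$
   Context: $\overline{G}(\mathcal{S})$ is the beamforming gain of the subset $\mathcal{S}$ of agents; $\gamma_i$ is the effective localization error of agent $i$ and $\Phi_i$ its (wrapped normal) total phase. *)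

theory Defs
  imports "HOL-Probability.Probability"
begin

definition gaussian_measure :: "real \<Rightarrow> real measure" where
  "gaussian_measure v =
     (if v = 0 then return borel 0 else density lborel (normal_density 0 (sqrt v)))"

definition wrap2pi :: "real \<Rightarrow> real" where
  "wrap2pi y = y - 2 * pi * of_int \<lfloor>y / (2 * pi)\<rfloor>"

definition wrapped_normal :: "real \<Rightarrow> real measure" where
  "wrapped_normal v = distr (gaussian_measure v) borel wrap2pi"

definition Gbar :: "(nat \<Rightarrow> 'a \<Rightarrow> real) \<Rightarrow> nat set \<Rightarrow> 'a \<Rightarrow> real" where
  "Gbar \<Phi> S \<omega> = (\<Sum>i\<in>S. \<Sum>j\<in>S. cos (\<Phi> i \<omega> - \<Phi> j \<omega>))"

end

theory Submission imports Defs begin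
lemma cos_wrap: "cos (wrap2pi y) = cos y" "sin (wrap2pi y) = sin y"
  unfolding wrap2pi_def by (metis diff_add_cancel sin_cos_eq_iff)+

lemma std_dist: "distributed (density lborel std_normal_density) lborel (\<lambda>x. x) std_normal_density"
  unfolding distributed_def by (auto simp: distr_id2)

lemma gauss_trig:
  assumes "v \<ge> 0"
  shows "integral\<^sup>L (gaussian_measure v) cos \<ge> 0 \<and> integral\<^sup>L (gaussian_measure v) sin = 0"
proof (cases "v = 0")
  case True
  then show ?thesis by (simp add: gaussian_measure_def integral_return)
next
  case False
  define s where "s = sqrt v"
  have s: "s > 0" using False assms by (simp add: s_def)
  interpret P: prob_space std_normal_distribution by (rule prob_space_normal_density) simp
  have d: "distributed std_normal_distribution lborel (\<lambda>x. 0 + s * x) (normal_density 0 s)"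
    using P.normal_density_affine[OF std_dist, of s 0] s by simp
  have ch: "char std_normal_distribution s = complex_of_real (exp (- (s^2) / 2))"
    by (simp add: char_std_normal_distribution)
  have int: "integrable std_normal_distribution (\<lambda>x. iexp (s * x))"
    by (rule P.integrable_iexp[where f="\<lambda>x. complex_of_real (s * x)"]) auto
  have g: "gaussian_measure v = density lborel (normal_density 0 s)"
    using False by (simp add: gaussian_measure_def s_def)
  have "integral\<^sup>L (gaussian_measure v) f = (\<integral>x. f (s * x) \<partial>std_normal_distribution)"
    if "f \<in> borel_measurable borel" for f :: "real \<Rightarrow> real"
  proof -
    have fm: "f \<in> borel_measurable lborel" using that by simp
    have "integral\<^sup>L (gaussian_measure v) f = (LBINT x. normal_density 0 s x * f x)"
      unfolding g using that by (subst integral_real_density) auto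
    then show ?thesis using distributed_integral[OF d fm] by simp
  qed
  moreover have "(\<integral>x. cos (s * x) \<partial>std_normal_distribution) = Re (char std_normal_distribution s)"
    unfolding char_def
    apply (subst integral_Re[symmetric]) using int apply simp
    by (simp add: Re_exp)
  moreover have "(\<integral>x. sin (s * x) \<partial>std_normal_distribution) = Im (char std_normal_distribution s)"
    unfolding char_def
    apply (subst integral_Im[symmetric]) using int apply simp
    by (simp add: Im_exp)
  ultimately show ?thesis using ch by simp
qed

lemma wrapped_trig:
  assumes "v \<ge> 0"
  shows "integral\<^sup>L (wrapped_normal v) cos \<ge> 0 \<and> integral\<^sup>L (wrapped_normal v) sin = 0"
proof -
  have wm: "wrap2pi \<in> borel_measurable borel" unfolding wrap2pi_def by measurable
  have "integral\<^sup>L (wrapped_normal v) f = integral\<^sup>L (gaussian_measure v) (\<lambda>x. f (wrap2pi x))"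
    if "f \<in> borel_measurable borel" for f :: "real \<Rightarrow> real"
    unfolding wrapped_normal_def
    apply (subst integral_distr)
    using wm that by (auto simp: gaussian_measure_def)
  then show ?thesis using gauss_trig[OF assms] by (simp add: cos_wrap)
qed

theorem proposition2:
  fixes M :: "'a measure" and \<Phi> :: "nat \<Rightarrow> 'a \<Rightarrow> real" and \<gamma> :: "nat \<Rightarrow> real"
    and N :: nat and S S' :: "nat set"
  assumes "prob_space M"
    and "\<forall>i\<in>{1..N}. \<gamma> i \<ge> 0"
    and "prob_space.indep_vars M (\<lambda>_. borel) \<Phi> {1..N}"
    and "\<forall>i\<in>{1..N}. distr M borel (\<Phi> i) = wrapped_normal (\<gamma> i)"
    and "S \<subseteq> S'" and "S' \<subseteq> {1..N}"
  shows "prob_space.expectation M (Gbar \<Phi> S) \<le> prob_space.expectation M (Gbar \<Phi> S')"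
proof -
  interpret prob_space M by fact
  note ind = assms(3)
  have rv: "\<Phi> i \<in> borel_measurable M" if "i \<in> {1..N}" for i
    using ind that unfolding indep_vars_def by auto
  have ec: "expectation (\<lambda>x. cos (\<Phi> i x)) \<ge> 0" and es: "expectation (\<lambda>x. sin (\<Phi> i x)) = 0"
    if i: "i \<in> {1..N}" for i
  proof -
    have "expectation (\<lambda>x. f (\<Phi> i x)) = integral\<^sup>L (wrapped_normal (\<gamma> i)) f"
      if "f \<in> borel_measurable borel" for f :: "real \<Rightarrow> real"
      using integral_distr[OF rv[OF i] that] assms(4) i by simp
    then show "expectation (\<lambda>x. cos (\<Phi> i x)) \<ge> 0" "expectation (\<lambda>x. sin (\<Phi> i x)) = 0"
      using wrapped_trig[of "\<gamma> i"] assms(2) i by auto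
  qed
  have bint: "integrable M f" if "f \<in> borel_measurable M" "\<And>x. \<bar>f x\<bar> \<le> 1" for f :: "'a \<Rightarrow> real"
    by (rule integrable_const_bound[where B=1]) (use that in auto)
  define e where "e i j = expectation (\<lambda>x. cos (\<Phi> i x - \<Phi> j x))" for i j
  have e_nn: "e i j \<ge> 0" if "i \<in> {1..N}" "j \<in> {1..N}" for i j
  proof (cases "i = j")
    case True
    then show ?thesis by (simp add: e_def prob_space)
  next
    case False
    have sub: "{i, j} \<subseteq> {1..N}" using that by auto
    have prodint: "expectation (\<lambda>x. f (\<Phi> i x) * f (\<Phi> j x)) = expectation (\<lambda>x. f (\<Phi> i x)) * expectation (\<lambda>x. f (\<Phi> j x))"
      and prodint2: "integrable M (\<lambda>x. f (\<Phi> i x) * f (\<Phi> j x))"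
      if f: "f \<in> borel_measurable borel" "\<And>x. \<bar>f x\<bar> \<le> 1" for f :: "real \<Rightarrow> real"
    proof -
      have iv: "indep_vars (\<lambda>_. borel) (\<lambda>k x. f (\<Phi> k x)) {i, j}"
        by (rule indep_vars_compose2[OF indep_vars_subset[OF ind sub]]) (use f in auto)
      have ik: "integrable M (\<lambda>x. f (\<Phi> k x))" if "k \<in> {i,j}" for k
        using that sub rv f by (intro bint) auto
      from indep_vars_lebesgue_integral[OF _ iv ik] indep_vars_integrable[OF _ iv ik] False
      show "expectation (\<lambda>x. f (\<Phi> i x) * f (\<Phi> j x)) = expectation (\<lambda>x. f (\<Phi> i x)) * expectation (\<lambda>x. f (\<Phi> j x))"
        "integrable M (\<lambda>x. f (\<Phi> i x) * f (\<Phi> j x))" by auto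
    qed
    have "e i j = expectation (\<lambda>x. cos (\<Phi> i x) * cos (\<Phi> j x) + sin (\<Phi> i x) * sin (\<Phi> j x))"
      unfolding e_def by (simp add: cos_diff)
    also have "\<dots> = expectation (\<lambda>x. cos (\<Phi> i x) * cos (\<Phi> j x)) + expectation (\<lambda>x. sin (\<Phi> i x) * sin (\<Phi> j x))"
      by (rule Bochner_Integration.integral_add) (auto intro!: prodint2 simp: abs_cos_le_one abs_sin_le_one)
    also have "\<dots> = expectation (\<lambda>x. cos (\<Phi> i x)) * expectation (\<lambda>x. cos (\<Phi> j x))"
      using prodint[of cos] prodint[of sin] es[OF that(1)] by simp
    also have "\<dots> \<ge> 0" using ec that by simp
    finally show ?thesis .
  qed
  have EG: "expectation (Gbar \<Phi> T) = (\<Sum>i\<in>T. \<Sum>j\<in>T. e i j)" if "T \<subseteq> {1..N}" for T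
  proof -
    have fin: "finite T" using that finite_subset by blast
    have ij: "integrable M (\<lambda>x. cos (\<Phi> i x - \<Phi> j x))" if "i \<in> T" "j \<in> T" for i j
    proof -
      have [measurable]: "\<Phi> i \<in> borel_measurable M" "\<Phi> j \<in> borel_measurable M"
        using that \<open>T \<subseteq> {1..N}\<close> rv by auto
      show ?thesis by (rule bint) auto
    qed
    show ?thesis unfolding Gbar_def e_def
      apply (subst Bochner_Integration.integral_sum)
      using ij apply (auto intro!: Bochner_Integration.integrable_sum)[1]
      apply (rule sum.cong, simp)
      apply (subst Bochner_Integration.integral_sum)
      using ij by auto
  qed
  have fS': "finite S'" using assms(6) finite_subset by blast
  have "(\<Sum>i\<in>S. \<Sum>j\<in>S. e i j) \<le> (\<Sum>i\<in>S. \<Sum>j\<in>S'. e i j)"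
    apply (rule sum_mono) apply (rule sum_mono2[OF fS' assms(5)])
    using assms(5,6) e_nn by blast
  also have "\<dots> \<le> (\<Sum>i\<in>S'. \<Sum>j\<in>S'. e i j)"
    apply (rule sum_mono2[OF fS' assms(5)])
  proof -
    fix b assume "b \<in> S' - S"
    then have "b \<in> {1..N}" using assms(6) by auto
    then show "0 \<le> (\<Sum>j\<in>S'. e b j)" using assms(6) by (intro sum_nonneg e_nn) auto
  qed
  finally show ?thesis using EG assms(5,6) by auto
qed
end
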